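(* Let $n\ge2$ be an integer, $\alpha=1-\frac1n$, and let $\beta\le0$ be real with $Q\equiv\alpha-\beta-1\le1$. There is a constant $C_n>0$ depending only on $n$ such that for all such $\beta$ and all $y\le-1$, $$C_n^{-1}e^y(-y)^{\beta-\alpha}\le\mathcal{T}(\beta,\alpha,y)\le e^y(-y)^{\beta-\alpha},\qquad C_n^{-1}(-y)^{-\beta}\le\mathcal{M}(\beta,\alpha,y)\le C_n(-y)^{-\beta}.$$
   Context: $(x)_k=\prod_{m=1}^k(x+m-1)$, $(x)_0=1$. $\mathcal{M}(\beta,\alpha,y)=\sum_{k\ge0}\frac{(\beta)_k}{(\alpha)_k}\frac{y^k}{k!}$. For $y<0$, $\mathcal{T}(\beta,\alpha,y)=\frac{e^y}{\Gamma(\alpha-\beta)}\int_0^\infty e^{yt}t^{\alpha-\beta-1}(1+t)^{\beta-1}dt$. *)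

theory Defs
  imports "HOL-Analysis.Analysis"
begin

definition kummerM :: "real \<Rightarrow> real \<Rightarrow> real \<Rightarrow> real" where
  "kummerM \<beta> \<alpha> y = (\<Sum>k. pochhammer \<beta> k / pochhammer \<alpha> k * y ^ k / fact k)"

definition tricomiT :: "real \<Rightarrow> real \<Rightarrow> real \<Rightarrow> real" where
  "tricomiT \<beta> \<alpha> y = exp y / Gamma (\<alpha> - \<beta>) *
     (LBINT t:{0<..}. exp (y * t) * t powr (\<alpha> - \<beta> - 1) * (1 + t) powr (\<beta> - 1))"

end

theory Submission
  imports Defs
begin


lemma pascal_sum:
  fixes g :: "nat \<Rightarrow> real"
  shows "(\<Sum>j\<le>Suc k. of_nat (Suc k choose j) * g j) =
         (\<Sum>j\<le>k. of_nat (k choose j) * g j) + (\<Sum>j\<le>k. of_nat (k choose j) * g (Suc j))"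
proof -
  have "(\<Sum>j\<le>Suc k. of_nat (Suc k choose j) * g j) = g 0 + (\<Sum>j\<le>k. of_nat (Suc k choose Suc j) * g (Suc j))"
    by (subst sum.atMost_Suc_shift) simp
  also have "\<dots> = g 0 + (\<Sum>j\<le>k. of_nat (k choose j) * g (Suc j)) + (\<Sum>j\<le>k. of_nat (k choose Suc j) * g (Suc j))"
    by (simp add: sum.distrib algebra_simps)
  also have "(\<Sum>j\<le>k. of_nat (k choose Suc j) * g (Suc j)) = (\<Sum>j<k. of_nat (k choose Suc j) * g (Suc j))"
    by (simp add: lessThan_Suc_atMost[symmetric])
  also have "(\<Sum>j\<le>k. of_nat (k choose j) * g j) = g 0 + (\<Sum>j<k. of_nat (k choose Suc j) * g (Suc j))"
  proof (cases k)
    case 0 then show ?thesis by simp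
  next
    case (Suc m)
    then show ?thesis by (simp only: sum.atMost_Suc_shift lessThan_Suc_atMost) simp
  qed
  ultimately show ?thesis by simp
qed

lemma chu:
  fixes \<alpha> \<beta> :: real
  assumes "\<alpha> > 0"
  shows "(\<Sum>j\<le>k. of_nat (k choose j) * ((-1)^j * pochhammer \<beta> j / pochhammer \<alpha> j))
         = pochhammer (\<alpha> - \<beta>) k / pochhammer \<alpha> k"
  using assms
proof (induction k arbitrary: \<alpha> \<beta>)
  case 0
  then show ?case by simp
next
  case (Suc k)
  have pa: "pochhammer \<alpha> j \<noteq> 0" for j using Suc.prems
    by (simp add: pochhammer_eq_0_iff)
  have pa1: "pochhammer (\<alpha>+1) j \<noteq> 0" for j using Suc.prems
    by (simp add: pochhammer_eq_0_iff)
  have IH: "(\<Sum>j\<le>k. of_nat (k choose j) * ((-1)^j * pochhammer (\<beta>+1) j / pochhammer (\<alpha>+1) j))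
         = pochhammer (\<alpha> - \<beta>) k / pochhammer (\<alpha>+1) k"
    using Suc.IH[of "\<alpha>+1" "\<beta>+1"] Suc.prems by simp
  note IH0 = Suc.IH[of \<alpha> \<beta>, OF Suc.prems]
  have tm: "(-1)^(Suc j) * pochhammer \<beta> (Suc j) / pochhammer \<alpha> (Suc j)
      = -(\<beta>/\<alpha>) * ((-1)^j * pochhammer (\<beta>+1) j / pochhammer (\<alpha>+1) j)" for j
    using Suc.prems by (simp add: pochhammer_rec field_simps)
  have "(\<Sum>j\<le>Suc k. of_nat (Suc k choose j) * ((-1)^j * pochhammer \<beta> j / pochhammer \<alpha> j))
     = pochhammer (\<alpha> - \<beta>) k / pochhammer \<alpha> k - (\<beta>/\<alpha>) * (pochhammer (\<alpha> - \<beta>) k / pochhammer (\<alpha>+1) k)"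
  proof -
    have "(\<Sum>j\<le>k. of_nat (k choose j) * ((-1)^(Suc j) * pochhammer \<beta> (Suc j) / pochhammer \<alpha> (Suc j)))
      = (\<Sum>j\<le>k. -(\<beta>/\<alpha>) * (of_nat (k choose j) * ((-1)^j * pochhammer (\<beta>+1) j / pochhammer (\<alpha>+1) j)))"
      by (simp only: tm) (simp add: algebra_simps)
    also have "\<dots> = -(\<beta>/\<alpha>) * (pochhammer (\<alpha> - \<beta>) k / pochhammer (\<alpha>+1) k)"
      by (simp only: sum_distrib_left[symmetric] IH)
    finally show ?thesis by (subst pascal_sum) (simp only: IH0)
  qed
  also have "\<dots> = pochhammer (\<alpha> - \<beta>) (Suc k) / pochhammer \<alpha> (Suc k)"
  proof -
    have e1: "pochhammer \<alpha> (Suc k) = \<alpha> * pochhammer (\<alpha>+1) k" by (simp add: pochhammer_rec)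
    have e2: "pochhammer \<alpha> (Suc k) = pochhammer \<alpha> k * (\<alpha> + k)" by (simp add: pochhammer_Suc)
    have e3: "pochhammer (\<alpha>-\<beta>) (Suc k) = pochhammer (\<alpha>-\<beta>) k * (\<alpha> - \<beta> + k)" by (simp add: pochhammer_Suc)
    have pos: "\<alpha> + real k > 0" using Suc.prems by simp
    have hA: "pochhammer \<alpha> k = \<alpha> * pochhammer (\<alpha>+1) k / (\<alpha> + k)"
      using e1 e2 pos by (simp add: field_simps)
    show ?thesis unfolding e1 e3 hA using pa1[of k] Suc.prems pos
      by (simp add: field_simps)
  qed
  finally show ?case .
qed



lemma exp_sums_real: "(\<lambda>n. (x::real)^n / fact n) sums exp x"
  using exp_converges[of x] by (simp add: divide_inverse scaleR_conv_of_real mult.commute)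

lemma pois1: "(\<lambda>n. real n * ((x::real)^n / fact n)) sums (x * exp x)"
proof -
  have "(\<lambda>n. x * (x^n / fact n)) sums (x * exp x)" by (intro sums_mult exp_sums_real)
  moreover have "x * (x^n / fact n) = real (Suc n) * (x^(Suc n) / fact (Suc n))" for n
  proof -
    have "real (Suc n) * (x^(Suc n) / fact (Suc n)) = (real (Suc n) / real (Suc n)) * (x * x^n / fact n)"
      by (simp only: fact_Suc of_nat_mult) (simp add: field_simps del: of_nat_Suc)
    then show ?thesis by simp
  qed
  ultimately have "(\<lambda>n. real (Suc n) * (x^(Suc n) / fact (Suc n))) sums (x * exp x)" by simp
  then show ?thesis using sums_Suc[of "\<lambda>n. real n * (x^n / fact n)"] by simp
qed

lemma pois2: "(\<lambda>n. (real n)^2 * ((x::real)^n / fact n)) sums ((x^2 + x) * exp x)"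
proof -
  have "(\<lambda>n. x * (real n * (x^n / fact n) + x^n / fact n)) sums (x * (x * exp x + exp x))"
    by (intro sums_mult sums_add pois1 exp_sums_real)
  moreover have "x * (real n * (x^n / fact n) + x^n / fact n) = (real (Suc n))^2 * (x^(Suc n) / fact (Suc n))" for n
  proof -
    have "real (Suc n) * (x^(Suc n) / fact (Suc n)) = (real (Suc n) / real (Suc n)) * (x * x^n / fact n)"
      by (simp only: fact_Suc of_nat_mult) (simp add: field_simps del: of_nat_Suc)
    then have "real (Suc n) * (x^(Suc n) / fact (Suc n)) = x * (x^n / fact n)" by simp
    then have "(real (Suc n))^2 * (x^(Suc n) / fact (Suc n)) = real (Suc n) * (x * (x^n / fact n))"
      by (simp add: power2_eq_square mult.assoc)
    then show ?thesis by (simp add: algebra_simps add_divide_distrib)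
  qed
  ultimately have "(\<lambda>n. (real (Suc n))^2 * (x^(Suc n) / fact (Suc n))) sums ((x^2 + x) * exp x)"
    by (simp add: algebra_simps power2_eq_square)
  then show ?thesis using sums_Suc[of "\<lambda>n. (real n)^2 * (x^n / fact n)"] by simp
qed

lemma poisA: "(\<lambda>n. (real n + 1) * ((x::real)^n / fact n)) sums ((x + 1) * exp x)"
proof -
  have "(\<lambda>n. real n * ((x::real)^n / fact n) + x^n / fact n) sums (x * exp x + exp x)"
    by (intro sums_add pois1 exp_sums_real)
  moreover have "(\<lambda>n. real n * ((x::real)^n / fact n) + x^n / fact n) = (\<lambda>n. (real n + 1) * ((x::real)^n / fact n))"
    by (rule ext) (simp add: algebra_simps add_divide_distrib)
  ultimately show ?thesis by (simp add: algebra_simps)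
qed

lemma poisB: "(\<lambda>n. (real n + 1)^2 * ((x::real)^n / fact n)) sums ((x^2 + 3*x + 1) * exp x)"
proof -
  have "(\<lambda>n. ((real n)^2 * ((x::real)^n / fact n) + 2 * (real n * (x^n / fact n))) + x^n / fact n)
     sums (((x^2 + x) * exp x + 2 * (x * exp x)) + exp x)"
    by (intro sums_add sums_mult pois1 pois2 exp_sums_real)
  moreover have "(\<lambda>n. ((real n)^2 * ((x::real)^n / fact n) + 2 * (real n * (x^n / fact n))) + x^n / fact n)
     = (\<lambda>n. (real n + 1)^2 * ((x::real)^n / fact n))"
    by (rule ext) (simp add: algebra_simps power2_eq_square)
  moreover have "((x^2 + x) * exp x + 2 * (x * exp x)) + exp x = (x^2 + 3*x + 1) * exp x"
    by (simp add: algebra_simps)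
  ultimately show ?thesis by simp
qed

lemma pt_upper:
  fixes t x b :: real assumes "t > 0" "x > 0" "b \<ge> 0" "b \<le> 2"
  shows "t powr b \<le> x powr b * (1 + t^2 / x^2)"
proof -
  have one: "1 \<le> 1 + t^2 / x^2" by simp
  have xb: "x powr b > 0" using assms by simp
  show ?thesis
  proof (cases "t \<le> x")
    case True
    have "t powr b \<le> x powr b" using True assms by (intro powr_mono2) auto
    also have "\<dots> = x powr b * 1" by simp
    also have "\<dots> \<le> x powr b * (1 + t^2 / x^2)" using one xb by (intro mult_left_mono) auto
    finally show ?thesis .
  next
    case False
    have "(t / x) powr b \<le> (t / x) powr 2" using False assms by (intro powr_mono) auto
    also have "\<dots> = t^2 / x^2" using assms by (simp add: powr_realpow power_divide)
    finally have le: "(t / x) powr b \<le> t^2 / x^2" .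
    have "t powr b = x powr b * (t / x) powr b" using assms xb by (simp add: powr_divide)
    also have "\<dots> \<le> x powr b * (t^2 / x^2)" using le xb by (intro mult_left_mono) auto
    also have "\<dots> \<le> x powr b * (1 + t^2 / x^2)" using xb by (intro mult_left_mono) auto
    finally show ?thesis .
  qed
qed

lemma pt_lower_s:
  fixes s b :: real assumes "s > 0" "b \<ge> 0" "b \<le> 2"
  shows "s - s^2/4 - 1/4 \<le> s powr b"
proof (cases "s \<le> 1")
  case True
  have "s powr 2 \<le> s powr b" using True assms by (intro powr_mono') auto
  moreover have "s - s^2/4 - 1/4 \<le> s^2"
  proof -
    have "0 \<le> (s - 2/5)^2" by simp
    then show ?thesis by (simp add: power2_eq_square algebra_simps)
  qed
  ultimately show ?thesis using assms by (simp add: powr_realpow)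
next
  case False
  have "1 \<le> s powr b" using False assms by (simp add: ge_one_powr_ge_zero)
  moreover have "s - s^2/4 - 1/4 \<le> 1"
  proof -
    have "0 \<le> (s - 2)^2" by simp
    then show ?thesis by (simp add: power2_eq_square algebra_simps)
  qed
  ultimately show ?thesis by linarith
qed



lemma pt_lower:
  fixes t x b :: real assumes "t > 0" "x > 0" "b \<ge> 0" "b \<le> 2"
  shows "x powr b * (t/x - t^2/(4*x^2) - 1/4) \<le> t powr b"
proof -
  have a: "(t/x) - (t/x)^2/4 - 1/4 \<le> (t/x) powr b" using assms by (intro pt_lower_s) auto
  have b: "(t/x) powr b = t powr b / x powr b" using assms by (simp add: powr_divide)
  have c: "(t/x)^2/4 = t^2/(4*x^2)" by (simp add: power_divide)
  have "t/x - t^2/(4*x^2) - 1/4 \<le> t powr b / x powr b" using a unfolding b c .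
  then have "x powr b * (t/x - t^2/(4*x^2) - 1/4) \<le> x powr b * (t powr b / x powr b)"
    by (intro mult_left_mono) auto
  also have "\<dots> = t powr b" using assms by simp
  finally show ?thesis .
qed
lemma kummer_transform:
  fixes \<alpha> \<beta> y :: real
  assumes "\<alpha> > 0"
    and summ: "summable (\<lambda>j. norm (pochhammer \<beta> j / pochhammer \<alpha> j * y ^ j / fact j))"
  shows "(\<lambda>k. pochhammer (\<alpha> - \<beta>) k / pochhammer \<alpha> k * (-y) ^ k / fact k) sums (exp (-y) * kummerM \<beta> \<alpha> y)"
proof -
  define a where "a i = (-y)^i / fact i" for i
  define b where "b j = pochhammer \<beta> j / pochhammer \<alpha> j * y ^ j / fact j" for j
  have sa: "summable (\<lambda>k. norm (a k))"
    using summable_norm_exp[of "-y"] by (simp add: a_def divide_inverse scaleR_conv_of_real mult.commute)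
  have sb: "summable (\<lambda>k. norm (b k))" using summ by (simp add: b_def)
  have ea: "(\<Sum>k. a k) = exp (-y)" using exp_sums_real[of "-y"] by (simp add: a_def sums_iff)
  have eb: "(\<Sum>k. b k) = kummerM \<beta> \<alpha> y" by (simp add: b_def kummerM_def)
  have C: "(\<lambda>k. \<Sum>i\<le>k. a i * b (k - i)) sums (exp (-y) * kummerM \<beta> \<alpha> y)"
    using Cauchy_product_sums[OF sa sb] ea eb by simp
  have eq: "(\<Sum>i\<le>k. a i * b (k - i)) = pochhammer (\<alpha> - \<beta>) k / pochhammer \<alpha> k * (-y) ^ k / fact k" for k
  proof -
    have "(\<Sum>i\<le>k. a i * b (k - i)) = (\<Sum>j\<le>k. a (k - j) * b j)"
      using fps_mult_commute_lemma[of "\<lambda>i j. a i * b j" k] by (simp add: atMost_atLeast0)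
    also have "\<dots> = (\<Sum>j\<le>k. (-y)^k / fact k * (of_nat (k choose j) * ((-1)^j * pochhammer \<beta> j / pochhammer \<alpha> j)))"
    proof (rule sum.cong[OF refl])
      fix j assume "j \<in> {..k}"
      then have jk: "j \<le> k" by simp
      have p: "(-y)^k = (-y)^(k-j) * (-y)^j" using jk by (simp add: power_add[symmetric])
      have q: "(-y)^j = (-1)^j * y^j" by (metis mult_minus1 power_mult_distrib)
      have fk: "(fact k :: real) \<noteq> 0" by simp
      show "a (k - j) * b j = (-y)^k / fact k * (of_nat (k choose j) * ((-1)^j * pochhammer \<beta> j / pochhammer \<alpha> j))"
      proof -
        have u: "((-1::real)^j) * (-1)^j = 1" by (metis power_mult_distrib mult_minus1 minus_minus power_one)
        have fj: "(fact j :: real) \<noteq> 0" "(fact (k-j) :: real) \<noteq> 0" by simp_all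
        define P where "P = pochhammer \<beta> j / pochhammer \<alpha> j"
        have "a (k - j) * b j = (-y)^(k-j) * y^j * P / (fact (k-j) * fact j)"
          by (simp add: a_def b_def P_def mult_ac)
        also have "\<dots> = (-y)^(k-j) * y^j * P * ((-1)^j * (-1)^j) / (fact (k-j) * fact j)"
          by (simp add: u)
        also have "\<dots> = (-y)^k / fact k * (fact k / (fact j * fact (k - j)) * ((-1)^j * P))"
          unfolding p q using fj fk by (simp add: field_simps)
        finally show ?thesis unfolding binomial_fact[OF jk] P_def by simp
      qed
    qed
    also have "\<dots> = (-y)^k / fact k * (pochhammer (\<alpha> - \<beta>) k / pochhammer \<alpha> k)"
      by (simp only: sum_distrib_left[symmetric] chu[OF assms(1)])
    finally show ?thesis by (simp add: mult_ac)
  qed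
  show ?thesis using C unfolding eq .
qed



lemma poch_pos: "a > 0 \<Longrightarrow> pochhammer (a::real) k > 0"
  by (simp add: pochhammer_pos)

lemma bern_up:
  fixes v b :: real assumes "v > 0" "b \<ge> 0"
  shows "1 + b * v / (1 + v) \<le> (1 + v) powr b"
proof -
  have "b * (v / (1 + v)) \<le> b * ln (1 + v)"
    using ln_add1_ge[of v] assms by (intro mult_left_mono) (auto simp: add.commute)
  also have "1 + b * ln (1 + v) \<le> exp (b * ln (1 + v))" by (rule exp_ge_add_one_self)
  also have "exp (b * ln (1 + v)) = (1 + v) powr b" using assms by (simp add: powr_def)
  finally show ?thesis by simp
qed

lemma bern_down:
  fixes u b :: real assumes "u \<ge> 0" "b \<ge> 0" "b \<le> 1"
  shows "(1 + u) powr b \<le> 1 + b * u"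
proof -
  have "(1 + u) powr b * 1 powr (1 - b) \<le> b * (1 + u) + (1 - b) * 1"
    using assms by (intro Youngs_inequality_0) auto
  then show ?thesis by (simp add: algebra_simps)
qed

lemma c_upper_aux:
  fixes \<alpha> b :: real assumes "\<alpha> > 0" "b \<ge> 0"
  shows "pochhammer (\<alpha> + b) (Suc k) / pochhammer \<alpha> (Suc k) \<le> (1 + b / \<alpha>) * ((\<alpha> + k) / \<alpha>) powr b"
proof (induction k)
  case 0
  then show ?case using assms by (simp add: field_simps)
next
  case (Suc k)
  have pk: "pochhammer \<alpha> (Suc k) > 0" using assms by (simp add: poch_pos)
  have ak: "\<alpha> + real k > 0" using assms by simp
  have "pochhammer (\<alpha> + b) (Suc (Suc k)) / pochhammer \<alpha> (Suc (Suc k))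
      = pochhammer (\<alpha> + b) (Suc k) / pochhammer \<alpha> (Suc k) * (1 + b / (\<alpha> + Suc k))"
    using pk assms ak by (simp add: pochhammer_Suc[of _ "Suc k"] field_simps)
  also have "\<dots> \<le> (1 + b / \<alpha>) * ((\<alpha> + k) / \<alpha>) powr b * ((1 + 1/(\<alpha> + k)) powr b)"
  proof (rule mult_mono[OF Suc.IH])
    have f1: "1 + b * (1/(\<alpha>+k)) / (1 + 1/(\<alpha>+k)) \<le> (1 + 1/(\<alpha>+k)) powr b"
      using ak assms by (intro bern_up) auto
    have f2: "b * (1/(\<alpha>+k)) / (1 + 1/(\<alpha>+k)) = b / (\<alpha> + Suc k)"
    proof -
      have h: "1 + 1/(\<alpha>+k) = (\<alpha> + Suc k)/(\<alpha>+k)" using ak by (simp add: field_simps)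
      show ?thesis unfolding h using ak by (simp add: divide_divide_eq_right)
    qed
    show "1 + b / (\<alpha> + Suc k) \<le> (1 + 1/(\<alpha>+k)) powr b" using f1 unfolding f2 .
  qed (use assms ak in auto)
  also have "\<dots> = (1 + b / \<alpha>) * ((\<alpha> + Suc k) / \<alpha>) powr b"
  proof -
    have "((\<alpha> + k) / \<alpha>) * (1 + 1/(\<alpha> + k)) = (\<alpha> + Suc k) / \<alpha>"
    proof -
      have h: "1 + 1/(\<alpha>+k) = (\<alpha> + Suc k)/(\<alpha>+k)" using ak by (simp add: field_simps)
      show ?thesis unfolding h using ak assms by simp
    qed
    then have "((\<alpha> + k) / \<alpha>) powr b * ((1 + 1/(\<alpha>+k)) powr b) = ((\<alpha> + Suc k) / \<alpha>) powr b"
      using ak assms by (metis powr_mult less_eq_real_def divide_nonneg_pos zero_le_divide_1_iff add_nonneg_nonneg zero_le_one)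
    then show ?thesis by (simp add: mult.assoc)
  qed
  finally show ?case .
qed

lemma c_upper:
  fixes \<alpha> b :: real assumes "\<alpha> \<ge> 1/2" "\<alpha> \<le> 1" "b \<ge> 0" "b \<le> 2"
  shows "pochhammer (\<alpha> + b) k / pochhammer \<alpha> k \<le> 20 * (real k + 1) powr b"
proof -
  have a0: "\<alpha> > 0" using assms by simp
  have A: "pochhammer (\<alpha> + b) k / pochhammer \<alpha> k \<le> (1 + b / \<alpha>) * ((\<alpha> + k) / \<alpha>) powr b"
  proof (cases k)
    case 0
    have "1 \<le> (1 + b / \<alpha>) * 1" using assms a0 by simp
    then show ?thesis using 0 a0 by simp
  next
    case (Suc m)
    have "((\<alpha> + m) / \<alpha>) powr b \<le> ((\<alpha> + k) / \<alpha>) powr b"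
      using Suc a0 assms by (intro powr_mono2) (auto simp: divide_right_mono)
    then have "(1 + b / \<alpha>) * ((\<alpha> + m) / \<alpha>) powr b \<le> (1 + b / \<alpha>) * ((\<alpha> + k) / \<alpha>) powr b"
      using a0 assms by (intro mult_left_mono) auto
    then show ?thesis using c_upper_aux[OF a0 assms(3), of m] Suc by simp
  qed
  have B: "1 + b / \<alpha> \<le> 5" using assms a0 by (simp add: field_simps)
  have kk: "real k \<le> 2 * \<alpha> * real k" using mult_right_mono[of 1 "2*\<alpha>" "real k"] assms by simp
  have C: "((\<alpha> + k) / \<alpha>) powr b \<le> (2 * (real k + 1)) powr b"
    using assms a0 kk by (intro powr_mono2) (auto simp: field_simps)
  have D: "(2 * (real k + 1)) powr b = 2 powr b * (real k + 1) powr b"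
    by (rule powr_mult)
  have E: "2 powr b \<le> 4" using powr_mono[of b 2 2] assms by simp
  have "pochhammer (\<alpha> + b) k / pochhammer \<alpha> k \<le> 5 * ((2 * (real k + 1)) powr b)"
    using A B C by (meson mult_mono order_trans powr_ge_zero zero_le_divide_iff zero_le_one add_nonneg_nonneg less_eq_real_def a0 assms(3))
  also have "\<dots> \<le> 5 * (4 * (real k + 1) powr b)" unfolding D
    using E by (intro mult_left_mono mult_right_mono) auto
  finally show ?thesis by simp
qed

lemma c_lower_aux:
  fixes \<alpha> b :: real assumes "\<alpha> > 0" "b \<ge> 0" "b \<le> 1"
  shows "((\<alpha> + k) / \<alpha>) powr b \<le> pochhammer (\<alpha> + b) k / pochhammer \<alpha> k"
proof (induction k)
  case 0
  then show ?case using assms by simp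
next
  case (Suc k)
  have pk: "pochhammer \<alpha> k > 0" using assms by (simp add: poch_pos)
  have ak: "\<alpha> + real k > 0" using assms by simp
  have "((\<alpha> + Suc k) / \<alpha>) powr b = ((\<alpha> + k) / \<alpha>) powr b * ((1 + 1/(\<alpha>+k)) powr b)"
  proof -
    have "((\<alpha> + k) / \<alpha>) * (1 + 1/(\<alpha> + k)) = (\<alpha> + Suc k) / \<alpha>"
    proof -
      have h: "1 + 1/(\<alpha>+k) = (\<alpha> + Suc k)/(\<alpha>+k)" using ak by (simp add: field_simps)
      show ?thesis unfolding h using ak assms by simp
    qed
    then show ?thesis
      using ak assms by (metis powr_mult less_eq_real_def divide_nonneg_pos zero_le_divide_1_iff add_nonneg_nonneg zero_le_one)
  qed
  also have "\<dots> \<le> pochhammer (\<alpha> + b) k / pochhammer \<alpha> k * (1 + b * (1/(\<alpha>+k)))"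
    using Suc.IH bern_down[of "1/(\<alpha>+k)" b] ak assms pk poch_pos[of "\<alpha>+b" k] by (intro mult_mono) auto
  also have "\<dots> = pochhammer (\<alpha> + b) (Suc k) / pochhammer \<alpha> (Suc k)"
    using pk assms ak by (simp add: pochhammer_Suc field_simps)
  finally show ?case .
qed

lemma c_lower:
  fixes \<alpha> b :: real assumes "\<alpha> \<ge> 1/2" "\<alpha> \<le> 1" "b \<ge> 0" "b \<le> 2"
  shows "(real k + 1) powr b / 2 \<le> pochhammer (\<alpha> + b) k / pochhammer \<alpha> k"
proof (cases "b \<le> 1")
  case True
  have a0: "\<alpha> > 0" using assms by simp
  have "(real k + 1) powr b \<le> ((\<alpha> + k) / \<alpha>) powr b"
    using assms a0 by (intro powr_mono2) (auto simp: field_simps intro: mult_left_le_one_le)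
  also have "\<dots> \<le> pochhammer (\<alpha> + b) k / pochhammer \<alpha> k"
    using c_lower_aux[OF a0 assms(3) True] .
  finally show ?thesis using powr_ge_zero[of "real k + 1" b] by linarith
next
  case False
  have a0: "\<alpha> > 0" using assms by simp
  have r: "pochhammer (\<alpha> + 1) k / pochhammer \<alpha> k = (\<alpha> + k) / \<alpha>"
  proof -
    have "\<alpha> * pochhammer (\<alpha> + 1) k = pochhammer \<alpha> k * (\<alpha> + k)"
      using pochhammer_rec[of \<alpha> k] pochhammer_Suc[of \<alpha> k] by simp
    then show ?thesis using a0 poch_pos[OF a0, of k] by (simp add: field_simps)
  qed
  have split: "pochhammer (\<alpha> + b) k / pochhammer \<alpha> k
      = pochhammer ((\<alpha> + 1) + (b - 1)) k / pochhammer (\<alpha> + 1) k * ((\<alpha> + k) / \<alpha>)"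
  proof -
    have e: "(\<alpha> + 1) + (b - 1) = \<alpha> + b" by simp
    have "pochhammer (\<alpha> + 1) k > 0" using a0 by (intro poch_pos) auto
    then show ?thesis unfolding e r[symmetric] by simp
  qed
  have L: "(((\<alpha> + 1) + k) / (\<alpha> + 1)) powr (b - 1) \<le> pochhammer ((\<alpha> + 1) + (b - 1)) k / pochhammer (\<alpha> + 1) k"
    using False assms a0 by (intro c_lower_aux) auto
  have kk: "\<alpha> * real k \<le> real k" using mult_right_mono[of \<alpha> 1 "real k"] assms by simp
  have M: "((real k + 1) / 2) powr (b - 1) \<le> (((\<alpha> + 1) + k) / (\<alpha> + 1)) powr (b - 1)"
    using False assms a0 kk by (intro powr_mono2) (auto simp: field_simps)
  have N: "((real k + 1) / 2) powr (b - 1) = (real k + 1) powr (b - 1) / 2 powr (b - 1)"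
    by (simp add: powr_divide)
  have O: "2 powr (b - 1) \<le> 2" using powr_mono[of "b-1" 1 2] assms by simp
  have P: "(real k + 1) powr (b - 1) / 2 \<le> ((real k + 1) / 2) powr (b - 1)"
    unfolding N using O by (intro divide_left_mono) auto
  have Q: "real k + 1 \<le> (\<alpha> + k) / \<alpha>"
    using assms a0 kk by (auto simp: field_simps)
  have "(real k + 1) powr b / 2 = (real k + 1) powr (b - 1) / 2 * (real k + 1)"
    by (simp add: powr_diff field_simps)
  also have "\<dots> \<le> pochhammer ((\<alpha> + 1) + (b - 1)) k / pochhammer (\<alpha> + 1) k * ((\<alpha> + k) / \<alpha>)"
  proof (rule mult_mono)
    show "(real k + 1) powr (b - 1) / 2 \<le> pochhammer ((\<alpha> + 1) + (b - 1)) k / pochhammer (\<alpha> + 1) k"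
      using P M L by linarith
    show "0 \<le> pochhammer ((\<alpha> + 1) + (b - 1)) k / pochhammer (\<alpha> + 1) k"
      using poch_pos[of "\<alpha> + 1" k] poch_pos[of "(\<alpha> + 1) + (b - 1)" k] a0 False by simp
  qed (use Q in auto)
  finally show ?thesis using split by simp
qed



lemma gamma_hb:
  fixes a y :: real assumes a: "a > 0" and y: "y < 0"
  shows "has_bochner_integral lborel (\<lambda>t. indicator {0<..} t *\<^sub>R (exp (y*t) * t powr (a-1)))
           (Gamma a * (-y) powr (-a))"
proof -
  define c where "c = -y"
  have c: "c > 0" using y by (simp add: c_def)
  define f :: "real \<Rightarrow> ennreal" where "f t = ennreal (indicator {0..} t * t powr (a - 1) / exp t)" for t
  define g :: "real \<Rightarrow> real" where "g t = indicator {0<..} t *\<^sub>R (exp (y*t) * t powr (a-1))" for t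
  have fm: "f \<in> borel_measurable borel" unfolding f_def by measurable
  have gm: "g \<in> borel_measurable lborel" unfolding g_def by measurable
  have G: "ennreal (Gamma a) = (\<integral>\<^sup>+t. f t \<partial>lborel)"
    using Gamma_conv_nn_integral_real[OF a] by (simp add: f_def)
  also have "\<dots> = ennreal \<bar>c\<bar> * (\<integral>\<^sup>+u. f (0 + c * u) \<partial>lborel)"
    using nn_integral_real_affine[OF fm, of c 0] c by simp
  also have "(\<lambda>u. f (0 + c * u)) = (\<lambda>u. ennreal (c powr (a - 1)) * ennreal (g u))"
  proof (rule ext)
    fix u :: real
    show "f (0 + c * u) = ennreal (c powr (a - 1)) * ennreal (g u)"
    proof (cases "u > 0")
      case True
      have "(c * u) powr (a - 1) = c powr (a - 1) * u powr (a - 1)"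
        using True c by (simp add: powr_mult)
      moreover have "exp (y * u) = 1 / exp (c * u)" using c_def by (simp add: exp_minus field_simps)
      ultimately have r: "indicator {0..} (c * u) * (c * u) powr (a - 1) / exp (c * u) = c powr (a - 1) * g u"
        using True c by (simp add: g_def)
      have "f (0 + c * u) = ennreal (c powr (a - 1) * g u)" unfolding f_def using r by simp
      also have "\<dots> = ennreal (c powr (a - 1)) * ennreal (g u)"
        by (rule ennreal_mult'') (simp add: g_def indicator_def)
      finally show ?thesis .
    next
      case False
      then show ?thesis using c
        by (cases "u = 0") (auto simp: f_def g_def indicator_def zero_le_mult_iff)
    qed
  qed
  also have "(\<integral>\<^sup>+u. ennreal (c powr (a - 1)) * ennreal (g u) \<partial>lborel)
      = ennreal (c powr (a - 1)) * (\<integral>\<^sup>+u. ennreal (g u) \<partial>lborel)"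
    by (rule nn_integral_cmult) (use gm in measurable)
  finally have E: "ennreal (Gamma a) = ennreal (c * c powr (a - 1)) * (\<integral>\<^sup>+u. ennreal (g u) \<partial>lborel)"
    using c by (simp add: ennreal_mult'' mult.assoc)
  have cc: "c * c powr (a - 1) = c powr a" using c by (simp add: powr_diff field_simps)
  have "(\<integral>\<^sup>+u. ennreal (g u) \<partial>lborel) = ennreal (c powr (-a)) * ennreal (c powr a) * (\<integral>\<^sup>+u. ennreal (g u) \<partial>lborel)"
  proof -
    have "ennreal (c powr (-a)) * ennreal (c powr a) = 1"
      using c by (simp add: ennreal_mult''[symmetric] powr_add[symmetric])
    then show ?thesis by simp
  qed
  also have "\<dots> = ennreal (c powr (-a)) * ennreal (Gamma a)" using E cc by (simp add: mult.assoc)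
  also have "\<dots> = ennreal (Gamma a * c powr (-a))"
    using a by (simp add: ennreal_mult'' mult.commute Gamma_real_pos less_imp_le)
  finally have N: "(\<integral>\<^sup>+u. ennreal (g u) \<partial>lborel) = ennreal (Gamma a * c powr (-a))" .
  have "has_bochner_integral lborel g (Gamma a * c powr (-a))"
  proof (rule has_bochner_integral_nn_integral[OF gm])
    show "AE x in lborel. 0 \<le> g x" by (auto simp: g_def indicator_def)
    show "0 \<le> Gamma a * c powr (-a)" using a by (simp add: Gamma_real_pos less_imp_le)
  qed (rule N)
  moreover have "g = (\<lambda>t. indicator {0<..} t *\<^sub>R (exp (y*t) * t powr (a-1)))"
    by (rule ext) (simp add: g_def)
  ultimately show ?thesis by (simp add: c_def)
qed

lemma gamma_set:
  fixes a y :: real assumes a: "a > 0" and y: "y < 0"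
  shows "set_integrable lborel {0<..} (\<lambda>t. exp (y*t) * t powr (a-1))"
    and "(LBINT t:{0<..}. exp (y*t) * t powr (a-1)) = Gamma a * (-y) powr (-a)"
  using gamma_hb[OF a y] unfolding set_integrable_def set_lebesgue_integral_def
  by (auto simp: has_bochner_integral_iff)



lemma T_bounds:
  fixes \<alpha> \<beta> y :: real
  assumes b0: "\<beta> \<le> 0" and b1: "\<alpha> - \<beta> - 1 \<le> 1" and a1: "\<alpha> \<ge> 1/2" and a2: "\<alpha> < 1" and y: "y \<le> -1"
  shows "exp y * (-y) powr (\<beta> - \<alpha>) / 16 \<le> tricomiT \<beta> \<alpha> y"
    and "tricomiT \<beta> \<alpha> y \<le> exp y * (-y) powr (\<beta> - \<alpha>)"
proof -
  define a where "a = \<alpha> - \<beta>"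
  have a0: "a > 0" and a2': "a \<le> 2" using assms by (auto simp: a_def)
  have am1: "\<alpha> - \<beta> - 1 = a - 1" by (simp add: a_def)
  define F where "F t = exp (y * t) * t powr (a - 1) * (1 + t) powr (\<beta> - 1)" for t
  have y0: "y < 0" using y by simp
  have y1: "y + \<beta> - 1 < 0" using y b0 by simp
  note U = gamma_set[OF a0 y0]
  note L = gamma_set[OF a0 y1]
  have Fm: "set_borel_measurable lborel {0<..} F"
    unfolding set_borel_measurable_def F_def by measurable
  have FU: "F t \<le> exp (y * t) * t powr (a - 1)" if "t \<in> {0<..}" for t
  proof -
    have "(1 + t) powr (\<beta> - 1) \<le> (1 + t) powr 0" using that b0 by (intro powr_mono) auto
    then have "(1 + t) powr (\<beta> - 1) \<le> 1" using that by simp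
    then show ?thesis unfolding F_def by (intro mult_left_le) auto
  qed
  have F0: "0 \<le> F t" for t unfolding F_def by simp
  have FL: "exp ((y + \<beta> - 1) * t) * t powr (a - 1) \<le> F t" if "t \<in> {0<..}" for t
  proof -
    have t: "t > 0" using that by simp
    have "(\<beta> - 1) * t \<le> (\<beta> - 1) * ln (1 + t)"
      using ln_add_one_self_le_self[of t] t b0 by (intro mult_left_mono_neg) auto
    then have "exp ((\<beta> - 1) * t) \<le> (1 + t) powr (\<beta> - 1)"
      using t by (simp add: powr_def)
    then have "exp (y * t) * exp ((\<beta> - 1) * t) \<le> exp (y * t) * (1 + t) powr (\<beta> - 1)"
      by (intro mult_left_mono) auto
    moreover have "exp ((y + \<beta> - 1) * t) = exp (y * t) * exp ((\<beta> - 1) * t)"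
      by (simp add: exp_add[symmetric] algebra_simps)
    ultimately have "exp ((y + \<beta> - 1) * t) \<le> exp (y * t) * (1 + t) powr (\<beta> - 1)" by simp
    then have "exp ((y + \<beta> - 1) * t) * t powr (a - 1) \<le> exp (y * t) * (1 + t) powr (\<beta> - 1) * t powr (a - 1)"
      by (intro mult_right_mono) auto
    then show ?thesis by (simp add: F_def mult_ac)
  qed
  have Fi: "set_integrable lborel {0<..} F"
    by (rule set_integrable_bound[OF U(1) Fm]) (auto intro!: AE_I2 simp: FU F0 abs_of_nonneg)
  have I_up: "(LBINT t:{0<..}. F t) \<le> Gamma a * (-y) powr (-a)"
    using set_integral_mono[OF Fi U(1) FU] U(2) by simp
  have I_lo: "Gamma a * (-(y + \<beta> - 1)) powr (-a) \<le> (LBINT t:{0<..}. F t)"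
    using set_integral_mono[OF L(1) Fi FL] L(2) by simp
  have T: "tricomiT \<beta> \<alpha> y = exp y / Gamma a * (LBINT t:{0<..}. F t)"
    unfolding tricomiT_def F_def a_def by (rule refl)
  have G: "Gamma a > 0" using a0 by (simp add: Gamma_real_pos)
  have ex: "-a = \<beta> - \<alpha>" by (simp add: a_def)
  show "tricomiT \<beta> \<alpha> y \<le> exp y * (-y) powr (\<beta> - \<alpha>)"
  proof -
    have "tricomiT \<beta> \<alpha> y \<le> exp y / Gamma a * (Gamma a * (-y) powr (-a))"
      unfolding T using I_up G by (intro mult_left_mono) auto
    then show ?thesis using G ex by simp
  qed
  show "exp y * (-y) powr (\<beta> - \<alpha>) / 16 \<le> tricomiT \<beta> \<alpha> y"
  proof -
    have le4: "-(y + \<beta> - 1) \<le> 4 * (-y)" using assms by linarith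
    have A: "(4 * (-y)) powr (-a) \<le> (-(y + \<beta> - 1)) powr (-a)"
      using le4 a0 y1 by (intro powr_mono2') auto
    have B: "(4 * (-y)) powr (-a) = 4 powr (-a) * (-y) powr (-a)"
      using y0 by (intro powr_mult)
    have C0: "4 powr (-2) \<le> 4 powr (-a)" using a2' by (intro powr_mono) auto
    have C1: "(4::real) powr (-2) = 1/16" by (simp add: powr_minus powr_realpow)
    have C: "1/16 \<le> 4 powr (-a)" using C0 C1 by simp
    have "(-y) powr (-a) / 16 = (1/16) * (-y) powr (-a)" by simp
    also have "\<dots> \<le> 4 powr (-a) * (-y) powr (-a)" using C by (intro mult_right_mono) auto
    also have "\<dots> = (4 * (-y)) powr (-a)" using B by simp
    also have "\<dots> \<le> (-(y + \<beta> - 1)) powr (-a)" by (rule A)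
    finally have D: "(-y) powr (-a) / 16 \<le> (-(y + \<beta> - 1)) powr (-a)" .
    have "Gamma a * ((-y) powr (-a) / 16) \<le> Gamma a * (-(y + \<beta> - 1)) powr (-a)"
      using D G by (intro mult_left_mono) auto
    also have "\<dots> \<le> (LBINT t:{0<..}. F t)" by (rule I_lo)
    finally have "Gamma a * ((-y) powr (-a) / 16) \<le> (LBINT t:{0<..}. F t)" .
    then have "exp y / Gamma a * (Gamma a * ((-y) powr (-a) / 16)) \<le> tricomiT \<beta> \<alpha> y"
      unfolding T using G by (intro mult_left_mono) auto
    then show ?thesis using G ex by simp
  qed
qed




lemma poch_bound:
  fixes \<alpha> \<beta> :: real
  assumes "\<beta> \<le> 0" "\<beta> \<ge> -2" "\<alpha> \<ge> 1/2" "\<alpha> \<le> 1"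
  shows "\<bar>pochhammer \<beta> j\<bar> \<le> 4 * pochhammer \<alpha> j"
proof (induction j)
  case 0
  then show ?case by simp
next
  case (Suc j)
  show ?case
  proof (cases "j = 0")
    case True
    then show ?thesis using assms by simp
  next
    case False
    then have j1: "real j \<ge> 1" by simp
    have h: "\<bar>\<beta> + real j\<bar> \<le> \<alpha> + real j" using assms j1 by linarith
    have "\<bar>pochhammer \<beta> (Suc j)\<bar> = \<bar>pochhammer \<beta> j\<bar> * \<bar>\<beta> + real j\<bar>"
      by (simp add: pochhammer_Suc abs_mult)
    also have "\<dots> \<le> 4 * pochhammer \<alpha> j * (\<alpha> + real j)"
      using Suc.IH h by (intro mult_mono) auto
    also have "\<dots> = 4 * pochhammer \<alpha> (Suc j)" by (simp add: pochhammer_Suc)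
    finally show ?thesis .
  qed
qed

lemma M_summable:
  fixes \<alpha> \<beta> y :: real
  assumes "\<beta> \<le> 0" "\<beta> \<ge> -2" "\<alpha> \<ge> 1/2" "\<alpha> \<le> 1"
  shows "summable (\<lambda>j. norm (pochhammer \<beta> j / pochhammer \<alpha> j * y ^ j / fact j))"
proof (rule summable_comparison_test')
  show "summable (\<lambda>j. 4 * (\<bar>y\<bar> ^ j / fact j))"
    using exp_sums_real[of "\<bar>y\<bar>"] by (intro summable_mult) (auto simp: sums_iff)
  fix j :: nat
  have pa: "pochhammer \<alpha> j > 0" using assms by (intro poch_pos) auto
  have "\<bar>pochhammer \<beta> j\<bar> / pochhammer \<alpha> j \<le> 4"
    using poch_bound[OF assms, of j] pa by (simp add: divide_le_eq)
  then have "\<bar>pochhammer \<beta> j\<bar> / pochhammer \<alpha> j * (\<bar>y\<bar> ^ j / fact j) \<le> 4 * (\<bar>y\<bar> ^ j / fact j)"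
    by (intro mult_right_mono) auto
  then show "norm (norm (pochhammer \<beta> j / pochhammer \<alpha> j * y ^ j / fact j)) \<le> 4 * (\<bar>y\<bar> ^ j / fact j)"
    using pa by (simp add: abs_mult power_abs)
qed

lemma M_bounds:
  fixes \<alpha> \<beta> y :: real
  assumes b0: "\<beta> \<le> 0" and b1: "\<alpha> - \<beta> - 1 \<le> 1" and a1: "\<alpha> \<ge> 1/2" and a2: "\<alpha> < 1" and y: "y \<le> -1"
  shows "(-y) powr (-\<beta>) / 4 \<le> kummerM \<beta> \<alpha> y"
    and "kummerM \<beta> \<alpha> y \<le> 120 * (-y) powr (-\<beta>)"
proof -
  define x where "x = -y"
  define b where "b = -\<beta>"
  have x1: "x \<ge> 1" and x0: "x > 0" using y by (auto simp: x_def)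
  have bb: "b \<ge> 0" "b \<le> 2" using assms by (auto simp: b_def)
  have ab: "\<alpha> - \<beta> = \<alpha> + b" by (simp add: b_def)
  define E where "E k = x ^ k / fact k" for k
  have E0: "E k \<ge> 0" for k using x0 by (simp add: E_def)
  define c where "c k = pochhammer (\<alpha> + b) k / pochhammer \<alpha> k" for k
  have S: "(\<lambda>k. c k * E k) sums (exp x * kummerM \<beta> \<alpha> y)"
  proof -
    have "(\<lambda>k. pochhammer (\<alpha> - \<beta>) k / pochhammer \<alpha> k * (-y) ^ k / fact k) sums (exp (-y) * kummerM \<beta> \<alpha> y)"
      using assms by (intro kummer_transform M_summable) auto
    then show ?thesis unfolding ab c_def E_def x_def by (simp add: mult.assoc)
  qed
  have ex: "exp x > 0" by simp
  have xb: "x powr b > 0" using x0 by simp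
  have SU: "(\<lambda>k. 20 * x powr b * (E k + (real k + 1)^2 * E k / x^2))
      sums (20 * x powr b * (exp x + (x^2 + 3*x + 1) * exp x / x^2))"
    unfolding E_def by (intro sums_mult sums_add sums_divide exp_sums_real poisB)
  have PU: "c k * E k \<le> 20 * x powr b * (E k + (real k + 1)^2 * E k / x^2)" for k
  proof -
    have "c k * E k \<le> (20 * (real k + 1) powr b) * E k"
      unfolding c_def using c_upper[of \<alpha> b k] assms bb E0 by (intro mult_right_mono) auto
    also have "\<dots> \<le> 20 * (x powr b * (1 + (real k + 1)^2 / x^2)) * E k"
      using pt_upper[of "real k + 1" x b] x0 bb E0 by (intro mult_right_mono mult_left_mono) auto
    also have "\<dots> = 20 * x powr b * (E k + (real k + 1)^2 * E k / x^2)"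
      by (simp add: algebra_simps)
    finally show ?thesis .
  qed
  have U1: "exp x * kummerM \<beta> \<alpha> y \<le> 20 * x powr b * (exp x + (x^2 + 3*x + 1) * exp x / x^2)"
    by (rule sums_le[OF PU S SU])
  have q: "(x^2 + 3*x + 1) / x^2 \<le> 5"
  proof -
    have "x \<le> x^2" "1 \<le> x^2" using x1 by (auto simp: power2_eq_square intro: order_trans[OF _ mult_right_mono[of 1 x x]])
    then have "x^2 + 3*x + 1 \<le> 5 * x^2" by linarith
    then show ?thesis using x0 by (simp add: divide_le_eq)
  qed
  have "exp x + (x^2 + 3*x + 1) * exp x / x^2 = exp x * (1 + (x^2 + 3*x + 1) / x^2)"
    by (simp add: algebra_simps)
  also have "\<dots> \<le> exp x * 6" using q by (intro mult_left_mono) auto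
  finally have U2: "exp x + (x^2 + 3*x + 1) * exp x / x^2 \<le> exp x * 6" .
  have "exp x * kummerM \<beta> \<alpha> y \<le> 20 * x powr b * (exp x + (x^2 + 3*x + 1) * exp x / x^2)" by (rule U1)
  also have "\<dots> \<le> 20 * x powr b * (exp x * 6)" using U2 xb by (intro mult_left_mono) auto
  also have "\<dots> = exp x * (120 * x powr b)" by simp
  finally have "exp x * kummerM \<beta> \<alpha> y \<le> exp x * (120 * x powr b)" .
  then show "kummerM \<beta> \<alpha> y \<le> 120 * (-y) powr (-\<beta>)"
    using ex by (simp add: x_def b_def)
  have SL: "(\<lambda>k. (1/2) * x powr b * ((real k + 1) * E k / x - (real k + 1)^2 * E k / (4 * x^2) - E k / 4))
      sums ((1/2) * x powr b * ((x + 1) * exp x / x - (x^2 + 3*x + 1) * exp x / (4 * x^2) - exp x / 4))"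
    unfolding E_def by (intro sums_mult sums_diff sums_divide exp_sums_real poisA poisB)
  have PL: "(1/2) * x powr b * ((real k + 1) * E k / x - (real k + 1)^2 * E k / (4 * x^2) - E k / 4) \<le> c k * E k" for k
  proof -
    have "(1/2) * x powr b * ((real k + 1) * E k / x - (real k + 1)^2 * E k / (4 * x^2) - E k / 4)
        = (1/2) * (x powr b * ((real k + 1) / x - (real k + 1)^2 / (4 * x^2) - 1/4)) * E k"
      by (simp add: algebra_simps)
    also have "\<dots> \<le> (1/2) * (real k + 1) powr b * E k"
      using pt_lower[of "real k + 1" x b] x0 bb E0 by (intro mult_right_mono mult_left_mono) auto
    also have "\<dots> \<le> c k * E k"
      unfolding c_def using c_lower[of \<alpha> b k] assms bb E0 by (intro mult_right_mono) auto
    finally show ?thesis .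
  qed
  have L1: "(1/2) * x powr b * ((x + 1) * exp x / x - (x^2 + 3*x + 1) * exp x / (4 * x^2) - exp x / 4)
      \<le> exp x * kummerM \<beta> \<alpha> y"
    by (rule sums_le[OF PL SL S])
  have r: "1/2 \<le> (x + 1) / x - (x^2 + 3*x + 1) / (4 * x^2) - 1 / 4"
  proof -
    have e: "(x + 1) / x - (x^2 + 3*x + 1) / (4 * x^2) - 1 / 4 = (2 * x^2 + x - 1) / (4 * x^2)"
      using x0 by (simp add: field_simps power2_eq_square)
    have "2 * x^2 \<le> 2 * x^2 + x - 1" using x1 by simp
    then show ?thesis unfolding e using x0 by (simp add: le_divide_eq)
  qed
  have "exp x * (x powr b / 4) = (1/2) * x powr b * exp x * (1/2)" by simp
  also have "\<dots> \<le> (1/2) * x powr b * exp x * ((x + 1) / x - (x^2 + 3*x + 1) / (4 * x^2) - 1 / 4)"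
    using r xb ex by (intro mult_left_mono) auto
  also have "\<dots> = (1/2) * x powr b * ((x + 1) * exp x / x - (x^2 + 3*x + 1) * exp x / (4 * x^2) - exp x / 4)"
    by (simp add: algebra_simps)
  also have "\<dots> \<le> exp x * kummerM \<beta> \<alpha> y" by (rule L1)
  finally have "exp x * (x powr b / 4) \<le> exp x * kummerM \<beta> \<alpha> y" .
  then show "(-y) powr (-\<beta>) / 4 \<le> kummerM \<beta> \<alpha> y"
    using ex by (simp add: x_def b_def)
qed


theorem lemma4p8:
  fixes n :: nat
  assumes "n \<ge> 2"
  shows "\<exists>C>0. \<forall>\<beta> y :: real.
    \<beta> \<le> 0 \<and> (1 - 1 / real n) - \<beta> - 1 \<le> 1 \<and> y \<le> -1 \<longrightarrow>
      (exp y * (-y) powr (\<beta> - (1 - 1 / real n)) / C \<le> tricomiT \<beta> (1 - 1 / real n) y \<and>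
       tricomiT \<beta> (1 - 1 / real n) y \<le> exp y * (-y) powr (\<beta> - (1 - 1 / real n)) \<and>
       (-y) powr (-\<beta>) / C \<le> kummerM \<beta> (1 - 1 / real n) y \<and>
       kummerM \<beta> (1 - 1 / real n) y \<le> C * (-y) powr (-\<beta>))"
proof (intro exI[of _ 120] conjI allI impI)
  define \<alpha> where "\<alpha> = 1 - 1 / real n"
  have n2: "real n \<ge> 2" using assms by simp
  have a1: "\<alpha> \<ge> 1/2"
  proof -
    have "1 / real n \<le> 1/2" using n2 by (simp add: divide_le_eq)
    then show ?thesis by (simp add: \<alpha>_def)
  qed
  have a2: "\<alpha> < 1" using n2 by (simp add: \<alpha>_def)
  show "(0::real) < 120" by simp
  fix \<beta> y :: real
  assume h: "\<beta> \<le> 0 \<and> (1 - 1 / real n) - \<beta> - 1 \<le> 1 \<and> y \<le> -1"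
  then have b0: "\<beta> \<le> 0" and b1: "\<alpha> - \<beta> - 1 \<le> 1" and y: "y \<le> -1" by (auto simp: \<alpha>_def)
  note T = T_bounds[OF b0 b1 a1 a2 y]
  note M = M_bounds[OF b0 b1 a1 a2 y]
  have p1: "0 \<le> exp y * (-y) powr (\<beta> - \<alpha>)" by simp
  have p2: "0 \<le> (-y) powr (-\<beta>)" by simp
  show "exp y * (-y) powr (\<beta> - (1 - 1 / real n)) / 120 \<le> tricomiT \<beta> (1 - 1 / real n) y"
    using T(1) p1 unfolding \<alpha>_def by linarith
  show "tricomiT \<beta> (1 - 1 / real n) y \<le> exp y * (-y) powr (\<beta> - (1 - 1 / real n))"
    using T(2) unfolding \<alpha>_def .
  show "(-y) powr (-\<beta>) / 120 \<le> kummerM \<beta> (1 - 1 / real n) y"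
    using M(1) p2 unfolding \<alpha>_def by linarith
  show "kummerM \<beta> (1 - 1 / real n) y \<le> 120 * (-y) powr (-\<beta>)"
    using M(2) unfolding \<alpha>_def .
qed

end
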